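(* Let $\phi=\tilde p/p$ be an irreducible rational inner function on $\mathbb{D}^3$ of degree $(m,n,1)$ with $p(z)=p_1(z_1,z_2)+z_3p_2(z_1,z_2)$, $\tilde p(z)=z_3\tilde p_1(z_1,z_2)+\tilde p_2(z_1,z_2)$. Assume $\tau=(\tau_1,\tau_2,\tau_3)\in\mathcal{Z}_p\cap\mathbb{T}^3$ and that the vertical line $\{(\tau_1,\tau_2)\}\times\mathbb{T}$ is not a component of $\mathcal{Z}_p$. Then $\phi^*(\tau)=\frac{\tilde p_2(\tau_1,\tau_2)}{p_1(\tau_1,\tau_2)}$, where $\phi^*(\tau)$ denotes the nontangential limit of $\phi$ at $\tau$.
   Context: A rational inner function (RIF) on $\mathbb{D}^3$ is a rational function holomorphic on the tridisk with unimodular radial limits a.e. on $\mathbb{T}^3$; it is written $\phi=\tilde p/p$ with $p$ zero-free on $\mathbb{D}^3$, $p,\tilde p$ without common factors. For degree $(m,n,1)$, $\tilde p(z)=z_1^mz_2^nz_3\overline{p(1/\bar z_1,1/\bar z_2,1/\bar z_3)}$ and $\tilde p_j(z_1,z_2)=z_1^mz_2^n\overline{p_j(1/\bar z_1,1/\bar z_2)}$. The nontangential limit at $\tau\in\mathbb{T}^3$ is the limit as $z\to\tau$ in $\mathbb{D}^3$ with $\|z-\tau\|\le C(1-\|z\|)$; it exists at every $\tau\in\mathbb{T}^3$ for every RIF. $\mathcal{Z}_p$ is the zero set of $p$. *)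

theory Defs
  imports "HOL-Analysis.Analysis"
begin

type_synonym c3 = "complex \<times> complex \<times> complex"

definition D3 :: "c3 set" where
  "D3 = {(a, b, c). norm a < 1 \<and> norm b < 1 \<and> norm c < 1}"

definition T3 :: "c3 set" where
  "T3 = {(a, b, c). norm a = 1 \<and> norm b = 1 \<and> norm c = 1}"

definition nmax :: "c3 \<Rightarrow> real" where
  "nmax z = (case z of (a, b, c) \<Rightarrow> max (norm a) (max (norm b) (norm c)))"

definition dmax :: "c3 \<Rightarrow> c3 \<Rightarrow> real" where
  "dmax z w = (case z of (a, b, c) \<Rightarrow> case w of (a', b', c') \<Rightarrow>
      max (norm (a - a')) (max (norm (b - b')) (norm (c - c'))))"

definition polyval3 :: "(nat \<Rightarrow> nat \<Rightarrow> nat \<Rightarrow> complex) \<Rightarrow> nat \<Rightarrow> nat \<Rightarrow> nat \<Rightarrow> c3 \<Rightarrow> complex" where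
  "polyval3 c m n l z = (case z of (z1, z2, z3) \<Rightarrow>
     (\<Sum>i\<le>m. \<Sum>j\<le>n. \<Sum>k\<le>l. c i j k * z1 ^ i * z2 ^ j * z3 ^ k))"

definition polyval2 :: "(nat \<Rightarrow> nat \<Rightarrow> complex) \<Rightarrow> nat \<Rightarrow> nat \<Rightarrow> complex \<Rightarrow> complex \<Rightarrow> complex" where
  "polyval2 c m n z1 z2 = (\<Sum>i\<le>m. \<Sum>j\<le>n. c i j * z1 ^ i * z2 ^ j)"

text \<open>Reflection z^(m,n,l) conj(p(1/conj z)), written on coefficients.\<close>
definition refl3 :: "(nat \<Rightarrow> nat \<Rightarrow> nat \<Rightarrow> complex) \<Rightarrow> nat \<Rightarrow> nat \<Rightarrow> nat \<Rightarrow> nat \<Rightarrow> nat \<Rightarrow> nat \<Rightarrow> complex" where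
  "refl3 c m n l i j k = cnj (c (m - i) (n - j) (l - k))"

definition refl2 :: "(nat \<Rightarrow> nat \<Rightarrow> complex) \<Rightarrow> nat \<Rightarrow> nat \<Rightarrow> nat \<Rightarrow> nat \<Rightarrow> complex" where
  "refl2 c m n i j = cnj (c (m - i) (n - j))"

definition is_poly3 :: "(c3 \<Rightarrow> complex) \<Rightarrow> bool" where
  "is_poly3 f \<longleftrightarrow> (\<exists>N c. \<forall>z. f z = polyval3 c N N N z)"

definition nonconst3 :: "(c3 \<Rightarrow> complex) \<Rightarrow> bool" where
  "nonconst3 f \<longleftrightarrow> \<not> (\<exists>a. \<forall>z. f z = a)"

definition poly3_dvd :: "(c3 \<Rightarrow> complex) \<Rightarrow> (c3 \<Rightarrow> complex) \<Rightarrow> bool" where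
  "poly3_dvd q f \<longleftrightarrow> (\<exists>r. is_poly3 r \<and> (\<forall>z. f z = q z * r z))"

definition irreducible3 :: "(c3 \<Rightarrow> complex) \<Rightarrow> bool" where
  "irreducible3 f \<longleftrightarrow> is_poly3 f \<and> nonconst3 f \<and>
     (\<forall>q r. is_poly3 q \<and> is_poly3 r \<and> (\<forall>z. f z = q z * r z) \<longrightarrow>
        \<not> nonconst3 q \<or> \<not> nonconst3 r)"

definition no_common_factor3 :: "(c3 \<Rightarrow> complex) \<Rightarrow> (c3 \<Rightarrow> complex) \<Rightarrow> bool" where
  "no_common_factor3 f g \<longleftrightarrow>
     (\<forall>q. is_poly3 q \<and> poly3_dvd q f \<and> poly3_dvd q g \<longrightarrow> \<not> nonconst3 q)"

definition radial_unimodular_ae :: "(c3 \<Rightarrow> complex) \<Rightarrow> bool" where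
  "radial_unimodular_ae f \<longleftrightarrow>
     (AE \<theta> in (lborel :: (real \<times> real \<times> real) measure).
        \<exists>L. ((\<lambda>r::real. f (of_real r * cis (fst \<theta>), of_real r * cis (fst (snd \<theta>)),
                            of_real r * cis (snd (snd \<theta>)))) \<longlongrightarrow> L) (at_left 1)
            \<and> norm L = 1)"

definition has_nt_limit :: "(c3 \<Rightarrow> complex) \<Rightarrow> c3 \<Rightarrow> complex \<Rightarrow> bool" where
  "has_nt_limit f \<tau> L \<longleftrightarrow>
     (\<forall>C>0. (f \<longlongrightarrow> L) (at \<tau> within {z \<in> D3. dmax z \<tau> \<le> C * (1 - nmax z)}))"

end

theory Submission imports Defs begin

lemma atMost1: "{..(1::nat)} = {0,1}" by auto

lemma p_split: "polyval3 c m n 1 (x,y,w) = polyval2 (\<lambda>i j. c i j 0) m n x y + w * polyval2 (\<lambda>i j. c i j 1) m n x y"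
  unfolding polyval3_def polyval2_def
  by (simp add: atMost1 sum.distrib sum_distrib_left algebra_simps)

lemma pt_split: "polyval3 (refl3 c m n 1) m n 1 (x,y,w) = w * polyval2 (refl2 (\<lambda>i j. c i j 0) m n) m n x y + polyval2 (refl2 (\<lambda>i j. c i j 1) m n) m n x y"
  unfolding polyval3_def polyval2_def refl3_def refl2_def
  by (simp add: atMost1 sum.distrib sum_distrib_left algebra_simps)

lemma unit_pow_diff: "norm (x::complex) = 1 \<Longrightarrow> i \<le> m \<Longrightarrow> x ^ (m - i) = x ^ m * cnj x ^ i"
proof -
  assume a: "norm x = 1" "i \<le> m"
  have xc: "x * cnj x = 1" using complex_norm_square[of x] a(1) by simp
  have e: "x ^ m = x ^ (m - i) * x ^ i" using a(2) by (metis le_add_diff_inverse2 power_add)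
  have "x ^ i * cnj x ^ i = 1" by (simp add: power_mult_distrib[symmetric] xc)
  then show ?thesis unfolding e by (simp add: mult.assoc)
qed

lemma rev_sum: "(\<Sum>j\<le>n. f (n - j) * (y::complex) ^ j) = (\<Sum>j\<le>n. f j * y ^ (n - j))"
  unfolding atLeast0AtMost[symmetric]
  by (subst sum.atLeastAtMost_rev) (auto intro!: sum.cong)

lemma refl_torus:
  assumes "norm x = 1" "norm y = 1"
  shows "polyval2 (refl2 a m n) m n x y = x^m * y^n * cnj (polyval2 a m n x y)"
proof -
  have "polyval2 (refl2 a m n) m n x y = (\<Sum>i\<le>m. \<Sum>j\<le>n. cnj (a (m - i) (n - j)) * x ^ i * y ^ j)"
    unfolding polyval2_def refl2_def by simp
  also have "\<dots> = (\<Sum>i\<le>m. \<Sum>j\<le>n. cnj (a i (n - j)) * x ^ (m - i) * y ^ j)"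
    unfolding atLeast0AtMost[symmetric]
    by (subst sum.atLeastAtMost_rev) (auto intro!: sum.cong)
  also have "\<dots> = (\<Sum>i\<le>m. \<Sum>j\<le>n. cnj (a i j) * x ^ (m - i) * y ^ (n - j))"
    by (rule sum.cong[OF refl]) (rule rev_sum)
  also have "\<dots> = (\<Sum>i\<le>m. \<Sum>j\<le>n. x^m * y^n * (cnj (a i j) * cnj x ^ i * cnj y ^ j))"
    by (intro sum.cong refl) (simp add: unit_pow_diff[OF assms(1)] unit_pow_diff[OF assms(2)] mult_ac)
  also have "\<dots> = x^m * y^n * cnj (polyval2 a m n x y)"
  proof -
    have "cnj (polyval2 a m n x y) = (\<Sum>i\<le>m. \<Sum>j\<le>n. cnj (a i j) * cnj x ^ i * cnj y ^ j)"
      unfolding polyval2_def by simp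
    then show ?thesis by (simp only: sum_distrib_left)
  qed
  finally show ?thesis .
qed

definition Q1 :: "(nat \<Rightarrow> nat \<Rightarrow> complex) \<Rightarrow> nat \<Rightarrow> nat \<Rightarrow> complex \<Rightarrow> complex \<Rightarrow> complex \<Rightarrow> complex" where
  "Q1 a M N t x y = (\<Sum>i\<le>M. \<Sum>j\<le>N. a i j * (\<Sum>k<i. t ^ (i - Suc k) * x ^ k) * y ^ j)"

definition Q2 :: "(nat \<Rightarrow> nat \<Rightarrow> complex) \<Rightarrow> nat \<Rightarrow> nat \<Rightarrow> complex \<Rightarrow> complex \<Rightarrow> complex \<Rightarrow> complex" where
  "Q2 a M N t u y = (\<Sum>i\<le>M. \<Sum>j\<le>N. a i j * t ^ i * (\<Sum>k<j. u ^ (j - Suc k) * y ^ k))"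

lemma fac1: "polyval2 a M N x y - polyval2 a M N t y = (x - t) * Q1 a M N t x y"
proof -
  have "polyval2 a M N x y - polyval2 a M N t y = (\<Sum>i\<le>M. \<Sum>j\<le>N. a i j * (x ^ i - t ^ i) * y ^ j)"
    unfolding polyval2_def by (simp add: sum_subtractf[symmetric] algebra_simps)
  also have "\<dots> = (\<Sum>i\<le>M. \<Sum>j\<le>N. (x - t) * (a i j * (\<Sum>k<i. t ^ (i - Suc k) * x ^ k) * y ^ j))"
    by (intro sum.cong refl) (simp only: power_diff_sumr2 mult_ac)
  also have "\<dots> = (x - t) * Q1 a M N t x y"
    unfolding Q1_def by (simp only: sum_distrib_left)
  finally show ?thesis .
qed

lemma fac2: "polyval2 a M N t y - polyval2 a M N t u = (y - u) * Q2 a M N t u y"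
proof -
  have "polyval2 a M N t y - polyval2 a M N t u = (\<Sum>i\<le>M. \<Sum>j\<le>N. a i j * t ^ i * (y ^ j - u ^ j))"
    unfolding polyval2_def by (simp add: sum_subtractf[symmetric] algebra_simps)
  also have "\<dots> = (\<Sum>i\<le>M. \<Sum>j\<le>N. (y - u) * (a i j * t ^ i * (\<Sum>k<j. u ^ (j - Suc k) * y ^ k)))"
    by (intro sum.cong refl) (simp only: power_diff_sumr2 mult_ac)
  also have "\<dots> = (y - u) * Q2 a M N t u y"
    unfolding Q2_def by (simp only: sum_distrib_left)
  finally show ?thesis .
qed

lemma tendsto_polyval2 [tendsto_intros]:
  "(f \<longlongrightarrow> a) F \<Longrightarrow> (g \<longlongrightarrow> b) F \<Longrightarrow> ((\<lambda>x. polyval2 c M N (f x) (g x)) \<longlongrightarrow> polyval2 c M N a b) F"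
  unfolding polyval2_def by (intro tendsto_intros)

lemma tendsto_Q1 [tendsto_intros]:
  "(f \<longlongrightarrow> a) F \<Longrightarrow> (g \<longlongrightarrow> b) F \<Longrightarrow> ((\<lambda>x. Q1 c M N t (f x) (g x)) \<longlongrightarrow> Q1 c M N t a b) F"
  unfolding Q1_def by (intro tendsto_intros)

lemma tendsto_Q2 [tendsto_intros]:
  "(g \<longlongrightarrow> b) F \<Longrightarrow> ((\<lambda>x. Q2 c M N t u (g x)) \<longlongrightarrow> Q2 c M N t u b) F"
  unfolding Q2_def by (intro tendsto_intros)

lemma disk_lemma:
  assumes "\<forall>w. norm w < 1 \<longrightarrow> Cv + w * Dv \<noteq> (0::complex)"
  shows "Cv \<noteq> 0 \<and> norm Dv \<le> norm Cv"
proof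
  show "Cv \<noteq> 0" using assms[rule_format, of 0] by simp
  show "norm Dv \<le> norm Cv"
  proof (rule ccontr)
    assume h: "\<not> norm Dv \<le> norm Cv"
    then have "Dv \<noteq> 0" by auto
    let ?w = "- Cv / Dv"
    have "norm ?w < 1" using h \<open>Dv \<noteq> 0\<close> by (simp add: norm_divide divide_less_eq)
    moreover have "Cv + ?w * Dv = 0" using \<open>Dv \<noteq> 0\<close> by simp
    ultimately show False using assms by blast
  qed
qed

lemma torus_ineq:
  assumes zf: "\<And>x y w. norm x < 1 \<Longrightarrow> norm y < 1 \<Longrightarrow> norm w < 1 \<Longrightarrow> polyval2 a0 M N x y + w * polyval2 a1 M N x y \<noteq> 0"
    and "norm x = 1" "norm y = 1"
  shows "norm (polyval2 a1 M N x y) \<le> norm (polyval2 a0 M N x y)"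
proof (rule tendsto_le[of "at_left (1::real)"])
  show "at_left (1::real) \<noteq> bot" by simp
  have lx0: "((\<lambda>r::real. of_real r * x) \<longlongrightarrow> of_real 1 * x) (at_left 1)" by (intro tendsto_intros)
  have ly0: "((\<lambda>r::real. of_real r * y) \<longlongrightarrow> of_real 1 * y) (at_left 1)" by (intro tendsto_intros)
  have lx: "((\<lambda>r::real. of_real r * x) \<longlongrightarrow> x) (at_left 1)" using lx0 by simp
  have ly: "((\<lambda>r::real. of_real r * y) \<longlongrightarrow> y) (at_left 1)" using ly0 by simp
  show "((\<lambda>r. norm (polyval2 a0 M N (of_real r * x) (of_real r * y))) \<longlongrightarrow> norm (polyval2 a0 M N x y)) (at_left 1)"
    by (rule tendsto_norm[OF tendsto_polyval2[OF lx ly]])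
  show "((\<lambda>r. norm (polyval2 a1 M N (of_real r * x) (of_real r * y))) \<longlongrightarrow> norm (polyval2 a1 M N x y)) (at_left 1)"
    by (rule tendsto_norm[OF tendsto_polyval2[OF lx ly]])
  have "eventually (\<lambda>r. r \<in> {0<..<1}) (at_left (1::real))" by (rule eventually_at_left_real) simp
  then show "eventually (\<lambda>r. norm (polyval2 a1 M N (of_real r * x) (of_real r * y)) \<le> norm (polyval2 a0 M N (of_real r * x) (of_real r * y))) (at_left 1)"
  proof (rule eventually_mono)
    fix r :: real assume r: "r \<in> {0<..<1}"
    have "norm (of_real r * x) < 1" "norm (of_real r * y) < 1" using r assms by (auto simp: norm_mult)
    then show "norm (polyval2 a1 M N (of_real r * x) (of_real r * y)) \<le> norm (polyval2 a0 M N (of_real r * x) (of_real r * y))"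
      using disk_lemma zf by blast
  qed
qed

lemma slice0:
  fixes f :: "real \<Rightarrow> complex"
  assumes cont: "isCont f 0"
    and pos: "\<And>s. Im ((cis s - 1) * f s) = 0 \<and> Re ((cis s - 1) * f s) \<ge> 0"
  shows "f 0 = 0"
proof -
  have sin_lim: "((\<lambda>s. sin s / s) \<longlongrightarrow> 1) (at (0::real))"
    using DERIV_sin[of 0] unfolding has_field_derivative_iff by simp
  have cos_lim: "((\<lambda>s. (cos s - 1) / s) \<longlongrightarrow> 0) (at (0::real))"
    using DERIV_cos[of 0] unfolding has_field_derivative_iff by simp
  define Q where "Q s = Complex ((cos s - 1) / s) (sin s / s) * f s" for s
  have "(Q \<longlongrightarrow> Complex 0 1 * f 0) (at 0)"
    unfolding Q_def
    by (intro tendsto_intros sin_lim cos_lim) (use cont isCont_def in blast)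
  then have lim: "(Q \<longlongrightarrow> \<i> * f 0) (at 0)" by (simp add: Complex_eq)
  define W where "W s = (cis s - 1) * f s" for s
  have Qeq: "Q s = of_real (1 / s) * W s" if "s \<noteq> 0" for s
    using that unfolding Q_def W_def by (simp add: complex_eq_iff cis.ctr field_simps)
  have ReQ: "Re (Q s) = Re (W s) / s" and ImQ: "Im (Q s) = Im (W s) / s"
    if "s \<noteq> 0" for s using Qeq[OF that] by simp_all
  have W0: "Im (W s) = 0" "Re (W s) \<ge> 0" for s using pos[of s] unfolding W_def by auto
  have Rp: "0 \<le> Re (Q s)" if "s > 0" for s
    using that ReQ[of s] W0(2)[of s] by (simp del: Re_divide)
  have Rn: "Re (Q s) \<le> 0" if "s < 0" for s
    using that ReQ[of s] W0(2)[of s] by (simp add: divide_nonneg_neg del: Re_divide)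
  have Iz: "Im (Q s) = 0" if "s \<noteq> 0" for s
    using that ImQ[of s] W0(1)[of s] by (simp del: Im_divide)
  have r1: "0 \<le> Re (\<i> * f 0)"
    by (rule tendsto_lowerbound[OF tendsto_Re[OF filterlim_mono[OF lim order_refl at_le]], of "{0<..}"])
       (auto simp: eventually_at_filter Rp intro!: always_eventually)
  have r2: "Re (\<i> * f 0) \<le> 0"
    by (rule tendsto_upperbound[OF tendsto_Re[OF filterlim_mono[OF lim order_refl at_le]], of "{..<0}"])
       (auto simp: eventually_at_filter Rn intro!: always_eventually)
  have i1: "0 \<le> Im (\<i> * f 0)"
    by (rule tendsto_lowerbound[OF tendsto_Im[OF lim]])
       (auto simp: eventually_at_filter Iz intro!: always_eventually)
  have i2: "Im (\<i> * f 0) \<le> 0"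
    by (rule tendsto_upperbound[OF tendsto_Im[OF lim]])
       (auto simp: eventually_at_filter Iz intro!: always_eventually)
  have "\<i> * f 0 = 0" using r1 r2 i1 i2 by (simp add: complex_eq_iff)
  then show ?thesis by simp
qed

lemma aux_ring: "(c - 1) * (t * g * k) = ((t * c - t) * g) * (k::complex)"
  by (simp add: algebra_simps)

theorem lemma4p5:
  fixes c :: "nat \<Rightarrow> nat \<Rightarrow> nat \<Rightarrow> complex" and m n :: nat
    and \<tau>1 \<tau>2 \<tau>3 :: complex
  defines "p \<equiv> polyval3 c m n 1"
      and "pt \<equiv> polyval3 (refl3 c m n 1) m n 1"
      and "p1 \<equiv> polyval2 (\<lambda>i j. c i j 0) m n"
      and "p2 \<equiv> polyval2 (\<lambda>i j. c i j 1) m n"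
      and "pt2 \<equiv> polyval2 (refl2 (\<lambda>i j. c i j 1) m n) m n"
  assumes deg1: "\<exists>j\<le>n. \<exists>k\<le>1. c m j k \<noteq> 0"
      and deg2: "\<exists>i\<le>m. \<exists>k\<le>1. c i n k \<noteq> 0"
      and deg3: "\<exists>i\<le>m. \<exists>j\<le>n. c i j 1 \<noteq> 0"
      and zero_free: "\<forall>z\<in>D3. p z \<noteq> 0"
      and coprime: "no_common_factor3 p pt"
      and inner: "radial_unimodular_ae (\<lambda>z. pt z / p z)"
      and irred: "irreducible3 p"
      and tau: "(\<tau>1, \<tau>2, \<tau>3) \<in> T3" "p (\<tau>1, \<tau>2, \<tau>3) = 0"
      and not_line: "\<not> (\<forall>\<zeta>. norm \<zeta> = 1 \<longrightarrow> p (\<tau>1, \<tau>2, \<zeta>) = 0)"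
  shows "has_nt_limit (\<lambda>z. pt z / p z) (\<tau>1, \<tau>2, \<tau>3) (pt2 \<tau>1 \<tau>2 / p1 \<tau>1 \<tau>2)"
proof -
  define a0 where "a0 = (\<lambda>i j. c i j 0)"
  define a1 where "a1 = (\<lambda>i j. c i j 1)"
  define A where "A = polyval2 (refl2 a0 m n) m n"
  define B where "B = polyval2 (refl2 a1 m n) m n"
  have p1e: "p1 = polyval2 a0 m n" unfolding p1_def a0_def ..
  have p2e: "p2 = polyval2 a1 m n" unfolding p2_def a1_def ..
  have Be: "pt2 = B" unfolding pt2_def B_def a1_def ..
  have psplit: "p (x,y,w) = p1 x y + w * p2 x y" for x y w
    unfolding p_def p1_def p2_def by (rule p_split)
  have ptsplit: "pt (x,y,w) = w * A x y + B x y" for x y w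
    unfolding pt_def A_def B_def a0_def a1_def by (rule pt_split)
  have zf: "p1 x y + w * p2 x y \<noteq> 0" if "norm x < 1" "norm y < 1" "norm w < 1" for x y w
  proof -
    have "(x,y,w) \<in> D3" using that by (simp add: D3_def)
    then show ?thesis using zero_free psplit by metis
  qed
  have disk: "p1 x y \<noteq> 0 \<and> norm (p2 x y) \<le> norm (p1 x y)" if "norm x < 1" "norm y < 1" for x y
    by (rule disk_lemma) (use zf that in blast)
  have tor: "norm (p2 x y) \<le> norm (p1 x y)" if "norm x = 1" "norm y = 1" for x y
    unfolding p1e p2e by (rule torus_ineq) (use zf[unfolded p1e p2e] that in auto)
  have t1: "norm \<tau>1 = 1" and t2: "norm \<tau>2 = 1" and t3: "norm \<tau>3 = 1"
    using tau(1) by (auto simp: T3_def)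
  have pt0: "p1 \<tau>1 \<tau>2 + \<tau>3 * p2 \<tau>1 \<tau>2 = 0" using tau(2) psplit by simp
  have C0: "p1 \<tau>1 \<tau>2 \<noteq> 0"
  proof
    assume h: "p1 \<tau>1 \<tau>2 = 0"
    then have "\<tau>3 * p2 \<tau>1 \<tau>2 = 0" using pt0 by simp
    moreover have "\<tau>3 \<noteq> 0" using t3 by auto
    ultimately have "p2 \<tau>1 \<tau>2 = 0" by simp
    then have "\<forall>\<zeta>. norm \<zeta> = 1 \<longrightarrow> p (\<tau>1, \<tau>2, \<zeta>) = 0" using h psplit by simp
    then show False using not_line by blast
  qed
  have D0: "p2 \<tau>1 \<tau>2 \<noteq> 0" using pt0 C0 by auto
  have eqn: "norm (p1 \<tau>1 \<tau>2) = norm (p2 \<tau>1 \<tau>2)"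
  proof -
    have "p1 \<tau>1 \<tau>2 = - (\<tau>3 * p2 \<tau>1 \<tau>2)" using pt0 by (simp add: eq_neg_iff_add_eq_0)
    then show ?thesis using t3 by (simp add: norm_mult)
  qed
  define \<Delta> where "\<Delta> x y = A x y * p1 x y - B x y * p2 x y" for x y
  have torD: "\<Delta> x y * cnj (x^m * y^n) = of_real ((norm (p1 x y))^2 - (norm (p2 x y))^2)"
    if "norm x = 1" "norm y = 1" for x y
  proof -
    define u where "u = x^m * y^n"
    have "norm u = 1" unfolding u_def using that by (simp add: norm_mult norm_power)
    then have u1: "u * cnj u = 1" by (metis complex_norm_square of_real_1 power_one)
    have Ax: "A x y = u * cnj (p1 x y)" unfolding A_def p1e u_def using refl_torus[OF that] by simp
    have Bx: "B x y = u * cnj (p2 x y)" unfolding B_def p2e u_def using refl_torus[OF that] by simp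
    have "\<Delta> x y * cnj u = (u * cnj u) * (p1 x y * cnj (p1 x y) - p2 x y * cnj (p2 x y))"
      unfolding \<Delta>_def Ax Bx by (simp add: algebra_simps)
    also have "\<dots> = p1 x y * cnj (p1 x y) - p2 x y * cnj (p2 x y)"
      using u1 by simp
    also have "\<dots> = of_real ((norm (p1 x y))^2) - of_real ((norm (p2 x y))^2)"
      by (simp only: complex_norm_square)
    finally show ?thesis unfolding u_def by simp
  qed
  have torpos: "Im (\<Delta> x y * cnj (x^m * y^n)) = 0 \<and> Re (\<Delta> x y * cnj (x^m * y^n)) \<ge> 0"
    if "norm x = 1" "norm y = 1" for x y
  proof -
    have "(norm (p2 x y))^2 \<le> (norm (p1 x y))^2" using tor[OF that] by (simp add: power_mono)
    then show ?thesis unfolding torD[OF that] by simp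
  qed
  have \<Delta>0: "\<Delta> \<tau>1 \<tau>2 = 0"
  proof -
    have "\<Delta> \<tau>1 \<tau>2 * cnj (\<tau>1^m * \<tau>2^n) = 0" unfolding torD[OF t1 t2] eqn by simp
    moreover have "cnj (\<tau>1^m * \<tau>2^n) \<noteq> 0" using t1 t2 by auto
    ultimately show ?thesis by (metis mult_eq_0_iff)
  qed
  define G where "G x y = Q1 (refl2 a0 m n) m n \<tau>1 x y * p1 x y + A \<tau>1 y * Q1 a0 m n \<tau>1 x y
      - Q1 (refl2 a1 m n) m n \<tau>1 x y * p2 x y - B \<tau>1 y * Q1 a1 m n \<tau>1 x y" for x y
  define H where "H y = Q2 (refl2 a0 m n) m n \<tau>1 \<tau>2 y * p1 \<tau>1 y + A \<tau>1 \<tau>2 * Q2 a0 m n \<tau>1 \<tau>2 y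
      - Q2 (refl2 a1 m n) m n \<tau>1 \<tau>2 y * p2 \<tau>1 y - B \<tau>1 \<tau>2 * Q2 a1 m n \<tau>1 \<tau>2 y" for y
  have Gid: "\<Delta> x y = \<Delta> \<tau>1 y + (x - \<tau>1) * G x y" for x y
  proof -
    have e1: "A x y = A \<tau>1 y + (x - \<tau>1) * Q1 (refl2 a0 m n) m n \<tau>1 x y"
      using fac1[of "refl2 a0 m n" m n x y \<tau>1] unfolding A_def by (simp add: algebra_simps)
    have e2: "B x y = B \<tau>1 y + (x - \<tau>1) * Q1 (refl2 a1 m n) m n \<tau>1 x y"
      using fac1[of "refl2 a1 m n" m n x y \<tau>1] unfolding B_def by (simp add: algebra_simps)
    have e3: "p1 x y = p1 \<tau>1 y + (x - \<tau>1) * Q1 a0 m n \<tau>1 x y"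
      using fac1[of a0 m n x y \<tau>1] unfolding p1e by (simp add: algebra_simps)
    have e4: "p2 x y = p2 \<tau>1 y + (x - \<tau>1) * Q1 a1 m n \<tau>1 x y"
      using fac1[of a1 m n x y \<tau>1] unfolding p2e by (simp add: algebra_simps)
    show ?thesis unfolding \<Delta>_def G_def e1 e2 e3 e4 by (simp add: algebra_simps)
  qed
  have Hid: "\<Delta> \<tau>1 y = \<Delta> \<tau>1 \<tau>2 + (y - \<tau>2) * H y" for y
  proof -
    have e1: "A \<tau>1 y = A \<tau>1 \<tau>2 + (y - \<tau>2) * Q2 (refl2 a0 m n) m n \<tau>1 \<tau>2 y"
      using fac2[of "refl2 a0 m n" m n \<tau>1 y \<tau>2] unfolding A_def by (simp add: algebra_simps)
    have e2: "B \<tau>1 y = B \<tau>1 \<tau>2 + (y - \<tau>2) * Q2 (refl2 a1 m n) m n \<tau>1 \<tau>2 y"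
      using fac2[of "refl2 a1 m n" m n \<tau>1 y \<tau>2] unfolding B_def by (simp add: algebra_simps)
    have e3: "p1 \<tau>1 y = p1 \<tau>1 \<tau>2 + (y - \<tau>2) * Q2 a0 m n \<tau>1 \<tau>2 y"
      using fac2[of a0 m n \<tau>1 y \<tau>2] unfolding p1e by (simp add: algebra_simps)
    have e4: "p2 \<tau>1 y = p2 \<tau>1 \<tau>2 + (y - \<tau>2) * Q2 a1 m n \<tau>1 \<tau>2 y"
      using fac2[of a1 m n \<tau>1 y \<tau>2] unfolding p2e by (simp add: algebra_simps)
    show ?thesis unfolding \<Delta>_def H_def e1 e2 e3 e4 by (simp add: algebra_simps)
  qed
  have \<Delta>dec: "\<Delta> x y = (x - \<tau>1) * G x y + (y - \<tau>2) * H y" for x y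
    using Gid[of x y] Hid[of y] \<Delta>0 by simp
  have Gz: "G \<tau>1 \<tau>2 = 0"
  proof -
    have "(\<lambda>s. \<tau>1 * G (\<tau>1 * cis s) \<tau>2 * cnj ((\<tau>1 * cis s)^m * \<tau>2^n)) 0 = 0"
    proof (rule slice0)
      show "isCont (\<lambda>s. \<tau>1 * G (\<tau>1 * cis s) \<tau>2 * cnj ((\<tau>1 * cis s)^m * \<tau>2^n)) 0"
        unfolding isCont_def G_def A_def B_def p1e p2e by (intro tendsto_intros)
      fix s :: real
      define x where "x = \<tau>1 * cis s"
      have nx: "norm x = 1" unfolding x_def using t1 by (simp add: norm_mult)
      have "(cis s - 1) * (\<tau>1 * G (\<tau>1 * cis s) \<tau>2 * cnj ((\<tau>1 * cis s)^m * \<tau>2^n)) = ((x - \<tau>1) * G x \<tau>2) * cnj (x^m * \<tau>2^n)"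
        unfolding x_def by (rule aux_ring)
      also have "\<dots> = \<Delta> x \<tau>2 * cnj (x^m * \<tau>2^n)" using Gid[of x \<tau>2] \<Delta>0 by simp
      finally show "Im ((cis s - 1) * (\<tau>1 * G (\<tau>1 * cis s) \<tau>2 * cnj ((\<tau>1 * cis s)^m * \<tau>2^n))) = 0 \<and>
          Re ((cis s - 1) * (\<tau>1 * G (\<tau>1 * cis s) \<tau>2 * cnj ((\<tau>1 * cis s)^m * \<tau>2^n))) \<ge> 0"
        using torpos[OF nx t2] by (simp only:)
    qed
    then show ?thesis using t1 t2 by auto
  qed
  have Hz: "H \<tau>2 = 0"
  proof -
    have "(\<lambda>s. \<tau>2 * H (\<tau>2 * cis s) * cnj (\<tau>1^m * (\<tau>2 * cis s)^n)) 0 = 0"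
    proof (rule slice0)
      show "isCont (\<lambda>s. \<tau>2 * H (\<tau>2 * cis s) * cnj (\<tau>1^m * (\<tau>2 * cis s)^n)) 0"
        unfolding isCont_def H_def A_def B_def p1e p2e by (intro tendsto_intros)
      fix s :: real
      define y where "y = \<tau>2 * cis s"
      have ny: "norm y = 1" unfolding y_def using t2 by (simp add: norm_mult)
      have "(cis s - 1) * (\<tau>2 * H (\<tau>2 * cis s) * cnj (\<tau>1^m * (\<tau>2 * cis s)^n)) = ((y - \<tau>2) * H y) * cnj (\<tau>1^m * y^n)"
        unfolding y_def by (rule aux_ring)
      also have "\<dots> = \<Delta> \<tau>1 y * cnj (\<tau>1^m * y^n)" using Hid[of y] \<Delta>0 by simp
      finally show "Im ((cis s - 1) * (\<tau>2 * H (\<tau>2 * cis s) * cnj (\<tau>1^m * (\<tau>2 * cis s)^n))) = 0 \<and>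
          Re ((cis s - 1) * (\<tau>2 * H (\<tau>2 * cis s) * cnj (\<tau>1^m * (\<tau>2 * cis s)^n))) \<ge> 0"
        using torpos[OF t1 ny] by (simp only:)
    qed
    then show ?thesis using t1 t2 by auto
  qed
  have pw: "norm (pt (x,y,w) / p (x,y,w) - B x y / p1 x y)
      \<le> K * (norm (G x y) + norm (H y)) / (norm (p1 x y) * norm (p2 x y))"
    if K: "K > 0" and zS: "(x,y,w) \<in> D3" "dmax (x,y,w) (\<tau>1,\<tau>2,\<tau>3) \<le> K * (1 - nmax (x,y,w))"
      and Dn: "p2 x y \<noteq> 0" for x y w K
  proof -
    have nx: "norm x < 1" and ny: "norm y < 1" and nw: "norm w < 1" using zS(1) by (auto simp: D3_def)
    define \<delta> where "\<delta> = 1 - nmax (x,y,w)"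
    have \<delta>pos: "\<delta> > 0" unfolding \<delta>_def nmax_def using nx ny nw by simp
    have wle: "norm w \<le> 1 - \<delta>" unfolding \<delta>_def nmax_def by simp
    have dx: "norm (x - \<tau>1) \<le> K * \<delta>" and dy: "norm (y - \<tau>2) \<le> K * \<delta>"
      using zS(2) unfolding \<delta>_def dmax_def by auto
    have Cn: "p1 x y \<noteq> 0" and DC: "norm (p2 x y) \<le> norm (p1 x y)" using disk[OF nx ny] by auto
    define P where "P = p1 x y + w * p2 x y"
    have "norm (p1 x y) - norm (w * p2 x y) \<le> norm P" unfolding P_def by (rule norm_diff_ineq)
    moreover have "norm (w * p2 x y) \<le> (1 - \<delta>) * norm (p2 x y)"
      unfolding norm_mult by (rule mult_right_mono[OF wle]) simp
    ultimately have Pge: "norm (p2 x y) * \<delta> \<le> norm P" using DC by (simp add: algebra_simps)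
    have Dpos: "norm (p2 x y) > 0" using Dn by simp
    have Cpos: "norm (p1 x y) > 0" using Cn by simp
    have Ppos: "norm P > 0" using Pge Dpos \<delta>pos by (smt (verit) mult_pos_pos)
    then have Pn: "P \<noteq> 0" by auto
    have eq: "pt (x,y,w) / p (x,y,w) - B x y / p1 x y = w * \<Delta> x y / (p1 x y * P)"
      unfolding ptsplit psplit P_def[symmetric] \<Delta>_def using Pn Cn
      by (simp add: field_simps P_def)
    define g where "g = norm (G x y) + norm (H y)"
    have g0: "g \<ge> 0" unfolding g_def by simp
    have "norm (\<Delta> x y) \<le> norm (x - \<tau>1) * norm (G x y) + norm (y - \<tau>2) * norm (H y)"
      unfolding \<Delta>dec by (metis norm_mult norm_triangle_ineq)
    also have "\<dots> \<le> K * \<delta> * norm (G x y) + K * \<delta> * norm (H y)"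
      by (intro add_mono mult_right_mono dx dy norm_ge_zero)
    finally have \<Delta>le: "norm (\<Delta> x y) \<le> K * \<delta> * g" unfolding g_def by (simp add: algebra_simps)
    have "norm (w * \<Delta> x y) \<le> K * \<delta> * g"
    proof -
      have "norm (w * \<Delta> x y) \<le> 1 * norm (\<Delta> x y)" unfolding norm_mult
        using nw by (intro mult_right_mono) auto
      then show ?thesis using \<Delta>le by simp
    qed
    moreover have "norm (p1 x y) * norm (p2 x y) * \<delta> \<le> norm (p1 x y * P)"
      unfolding norm_mult using Pge Cpos by (simp add: mult.assoc mult_left_mono)
    ultimately have "norm (w * \<Delta> x y / (p1 x y * P)) \<le> K * \<delta> * g / (norm (p1 x y) * norm (p2 x y) * \<delta>)"
      unfolding norm_divide
      by (intro frac_le) (use K \<delta>pos g0 Cpos Dpos in auto)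
    also have "\<dots> = K * g / (norm (p1 x y) * norm (p2 x y))" using \<delta>pos by simp
    finally show ?thesis unfolding eq g_def .
  qed
  show ?thesis
    unfolding has_nt_limit_def
  proof (intro allI impI)
    fix K :: real assume K: "K > 0"
    define S where "S = {z \<in> D3. dmax z (\<tau>1, \<tau>2, \<tau>3) \<le> K * (1 - nmax z)}"
    let ?F = "at (\<tau>1, \<tau>2, \<tau>3) within S"
    have fx: "((\<lambda>z. fst z) \<longlongrightarrow> \<tau>1) ?F" using tendsto_fst[OF tendsto_ident_at[of "(\<tau>1, \<tau>2, \<tau>3)" S]] by simp
    have fy: "((\<lambda>z. fst (snd z)) \<longlongrightarrow> \<tau>2) ?F"
      using tendsto_fst[OF tendsto_snd[OF tendsto_ident_at[of "(\<tau>1, \<tau>2, \<tau>3)" S]]] by simp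
    have lC: "((\<lambda>z. p1 (fst z) (fst (snd z))) \<longlongrightarrow> p1 \<tau>1 \<tau>2) ?F"
      unfolding p1e by (rule tendsto_polyval2[OF fx fy])
    have lD: "((\<lambda>z. p2 (fst z) (fst (snd z))) \<longlongrightarrow> p2 \<tau>1 \<tau>2) ?F"
      unfolding p2e by (rule tendsto_polyval2[OF fx fy])
    have lB: "((\<lambda>z. B (fst z) (fst (snd z))) \<longlongrightarrow> B \<tau>1 \<tau>2) ?F"
      unfolding B_def by (rule tendsto_polyval2[OF fx fy])
    have lA: "((\<lambda>z. A (fst z) (fst (snd z))) \<longlongrightarrow> A \<tau>1 \<tau>2) ?F"
      unfolding A_def by (rule tendsto_polyval2[OF fx fy])
    have lAt: "((\<lambda>z. A \<tau>1 (fst (snd z))) \<longlongrightarrow> A \<tau>1 \<tau>2) ?F"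
      unfolding A_def by (rule tendsto_polyval2[OF tendsto_const fy])
    have lBt: "((\<lambda>z. B \<tau>1 (fst (snd z))) \<longlongrightarrow> B \<tau>1 \<tau>2) ?F"
      unfolding B_def by (rule tendsto_polyval2[OF tendsto_const fy])
    have lCt: "((\<lambda>z. p1 \<tau>1 (fst (snd z))) \<longlongrightarrow> p1 \<tau>1 \<tau>2) ?F"
      unfolding p1e by (rule tendsto_polyval2[OF tendsto_const fy])
    have lDt: "((\<lambda>z. p2 \<tau>1 (fst (snd z))) \<longlongrightarrow> p2 \<tau>1 \<tau>2) ?F"
      unfolding p2e by (rule tendsto_polyval2[OF tendsto_const fy])
    have lG: "((\<lambda>z. G (fst z) (fst (snd z))) \<longlongrightarrow> G \<tau>1 \<tau>2) ?F"
      unfolding G_def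
      by (intro tendsto_diff tendsto_add tendsto_mult tendsto_Q1[OF fx fy] lC lD lAt lBt)
    have lH: "((\<lambda>z. H (fst (snd z))) \<longlongrightarrow> H \<tau>2) ?F"
      unfolding H_def
      by (intro tendsto_diff tendsto_add tendsto_mult tendsto_Q2[OF fy] lCt lDt tendsto_const)
    define E where "E z = K * (norm (G (fst z) (fst (snd z))) + norm (H (fst (snd z))))
        / (norm (p1 (fst z) (fst (snd z))) * norm (p2 (fst z) (fst (snd z))))" for z :: c3
    have lE: "(E \<longlongrightarrow> K * (norm (G \<tau>1 \<tau>2) + norm (H \<tau>2)) / (norm (p1 \<tau>1 \<tau>2) * norm (p2 \<tau>1 \<tau>2))) ?F"
      unfolding E_def using C0 D0
      by (intro tendsto_divide tendsto_mult tendsto_add tendsto_norm tendsto_const lG lH lC lD) auto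
    then have lE0: "(E \<longlongrightarrow> 0) ?F" using Gz Hz by simp
    have ev1: "eventually (\<lambda>z. p2 (fst z) (fst (snd z)) \<noteq> 0) ?F"
      by (rule tendsto_imp_eventually_ne[OF lD D0])
    have ev2: "eventually (\<lambda>z. z \<in> S) ?F" by (simp add: eventually_at_filter)
    have evb: "eventually (\<lambda>z. norm (pt z / p z - B (fst z) (fst (snd z)) / p1 (fst z) (fst (snd z))) \<le> E z) ?F"
      using ev1 ev2
    proof eventually_elim
      case (elim z)
      obtain x y w where z: "z = (x, y, w)" by (cases z) auto
      show ?case using elim pw[OF K, of x y w] unfolding z S_def E_def by simp
    qed
    have l2: "((\<lambda>z. pt z / p z - B (fst z) (fst (snd z)) / p1 (fst z) (fst (snd z))) \<longlongrightarrow> 0) ?F"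
      by (rule Lim_null_comparison[OF evb lE0])
    have l1: "((\<lambda>z. B (fst z) (fst (snd z)) / p1 (fst z) (fst (snd z))) \<longlongrightarrow> B \<tau>1 \<tau>2 / p1 \<tau>1 \<tau>2) ?F"
      by (rule tendsto_divide[OF lB lC C0])
    have "((\<lambda>z. B (fst z) (fst (snd z)) / p1 (fst z) (fst (snd z))
        + (pt z / p z - B (fst z) (fst (snd z)) / p1 (fst z) (fst (snd z)))) \<longlongrightarrow> B \<tau>1 \<tau>2 / p1 \<tau>1 \<tau>2 + 0) ?F"
      by (rule tendsto_add[OF l1 l2])
    then show "((\<lambda>z. pt z / p z) \<longlongrightarrow> pt2 \<tau>1 \<tau>2 / p1 \<tau>1 \<tau>2)
        (at (\<tau>1, \<tau>2, \<tau>3) within {z \<in> D3. dmax z (\<tau>1, \<tau>2, \<tau>3) \<le> K * (1 - nmax z)})"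
      unfolding Be S_def[symmetric] by simp
  qed
qed

end
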